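(* In the limit-point setting described in the context, it holds $P$-a.s.: (1) for every $t\in[0,T]$, $\int_E X_t\,L(\mathrm d\gamma)=q(t)$; (2) under the measure $L$, the random path $t\mapsto X_t-X_0-\sigma W_t-Z_t$ is $L$-a.s. deterministic, i.e. its law under $L$ is a Dirac mass on $C([0,T];\mathbb R)$.
   Context: Fix $T>0$, $\sigma\in\mathbb R$. Let $n(0)=-1$, $n(1)=+1$; $|k|_t$ denotes the total variation on $[0,t]$ of a continuous BV path $k$. Condition (M) on $\mu:[0,1]\to\mathbb R$: (i) $\mu$ is $C^2$ on $(0,1)$ and there is $c\ge0$ with $-(\mu(x)-\mu(y))(x-y)\le c|x-y|^2$ for $x,y\in(0,1)$; (ii) $\sup_{x\in(0,1/2)}x|\mu(x)|+\sup_{x\in(1/2,1)}(1-x)|\mu(x)|<\infty$; (iii) there is $\rho\in(0,1/2)$ with $\mathrm{sign}(x-1/2)\mu(x)\ge0$ for $x\in(0,\rho)\cup(1-\rho,1)$, and $\mu(0)=\mu(1)=0$. Condition (Q): $q:[0,T]\to[0,1]$ Lipschitz with $\xi\le q\le1-\xi$ for some $\xi\in(0,1)$. Regularizations: for each $\epsilon>0$, $\mu^\epsilon$ is $C^2$ on $[0,1]$, $\mu^\epsilon=\mu$ on $[\epsilon,1-\epsilon]$, $|\mu^\epsilon|\le|\mu|$ on $(0,1)$, and satisfies the one-sided Lipschitz inequality of (M)(i) and the sign condition of (M)(iii) with constants independent of $\epsilon$. Limit-point setting: on a filtered probability space $(\Omega,\mathcal A,(\mathcal F_t),P)$ (usual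 conditions) are given independent real Brownian motions $(W^i)_{i\ge1}$; for each $N$, $X_0^{(N)}$ is $\mathcal F_0$-measurable, $[0,1]^N$-valued with $\frac1N\sum_iX_0^{i,N}=q(0)$ a.s., and $\frac1N\sum_i\delta_{X_0^{i,N}}$ converges in law to a probability measure $\nu_0$ on $[0,1]$. $(X^{i,N,\epsilon},k^{i,N,\epsilon})_{i=1}^N$ is the solution of the particle system: $X^i$ continuous $[0,1]$-valued, $k^i$ continuous BV, progressively measurable, $X^i_0=X^{i,N}_0$, $\mathrm dX^i_t=\big(-\mu^\epsilon(X^i_t)+\frac1N\sum_{j}\mu^\epsilon(X^j_t)\big)\mathrm dt+\dot q(t)\mathrm dt+\sigma\mathrm dW^i_t-\frac{\sigma}{N}\sum_j\mathrm dW^j_t-\mathrm dk^i_t+\frac1N\sum_j\mathrm dk^j_t$, $\mathrm d|k^i|=1_{\{X^i\in\{0,1\}\}}\mathrm d|k^i|$, $\mathrm dk^i=n(X^i)\mathrm d|k^i|$. $E=C([0,T];\mathbb R)\times C([0,T];[0,1])\times C([0,T];\mathbb R)$ (uniform topology, Borel $\sigma$-algebra), with generic element $(W,X,Z)$, the symbols $W,X,Z$ also denoting the canonical projections; $\mathcal P(E)$ has the weak topology. $L^{N,\epsilon}=\frac1N\sum_{i=1}^N\delta_{(W^i,X^{i,N,\epsilon},-\int_0^\cdot\mu^\epsilon(X^{i,N,\epsilon}_r)\mathrm dr-k^{i,N,\epsilon})}$. A sequence $(N_n,\epsilon_n)$ with $N_n\to\infty$, $\epsilon_n\to0$ is fixed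 such that $\mathrm{Law}(L^{N_n,\epsilon_n})$ converges weakly to a probability measure $Q$ on $\mathcal P(E)$, and $L$ is a $\mathcal P(E)$-valued random variable defined on $(\Omega,\mathcal A,P)$ with law $Q$. *)

theory Defs
  imports "HOL-Analysis.Analysis" "HOL-Probability.Probability"
begin

definition C2_on :: "real set \<Rightarrow> (real \<Rightarrow> real) \<Rightarrow> bool" where
  "C2_on S f \<longleftrightarrow> (\<exists>f' f''. (\<forall>x\<in>S. (f has_real_derivative f' x) (at x within S)
      \<and> (f' has_real_derivative f'' x) (at x within S)) \<and> continuous_on S f'')"

definition one_sided_lip :: "real \<Rightarrow> (real \<Rightarrow> real) \<Rightarrow> bool" where
  "one_sided_lip c f \<longleftrightarrow> (\<forall>x\<in>{0<..<1}. \<forall>y\<in>{0<..<1}. - (f x - f y) * (x - y) \<le> c * (x - y)\<^sup>2)"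

definition sign_cond :: "real \<Rightarrow> (real \<Rightarrow> real) \<Rightarrow> bool" where
  "sign_cond \<rho> f \<longleftrightarrow> (\<forall>x \<in> {0<..<\<rho>} \<union> {1-\<rho><..<1}. sgn (x - 1/2) * f x \<ge> 0)"

definition condM :: "(real \<Rightarrow> real) \<Rightarrow> bool" where
  "condM mu \<longleftrightarrow>
     C2_on {0<..<1} mu \<and> (\<exists>c\<ge>0. one_sided_lip c mu)
   \<and> (\<exists>B. (\<forall>x\<in>{0<..<1/2}. x * \<bar>mu x\<bar> \<le> B) \<and> (\<forall>x\<in>{1/2<..<1}. (1 - x) * \<bar>mu x\<bar> \<le> B))
   \<and> (\<exists>\<rho>\<in>{0<..<1/2}. sign_cond \<rho> mu) \<and> mu 0 = 0 \<and> mu 1 = 0"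

definition condQ :: "real \<Rightarrow> (real \<Rightarrow> real) \<Rightarrow> bool" where
  "condQ T q \<longleftrightarrow> (\<exists>C. C-lipschitz_on {0..T} q)
     \<and> (\<exists>\<xi>\<in>{0<..<1}. \<forall>t\<in>{0..T}. \<xi> \<le> q t \<and> q t \<le> 1 - \<xi>)"

definition regularization :: "(real \<Rightarrow> real) \<Rightarrow> (real \<Rightarrow> real \<Rightarrow> real) \<Rightarrow> bool" where
  "regularization mu mueps \<longleftrightarrow> (\<exists>c\<ge>0. \<exists>\<rho>\<in>{0<..<1/2}. \<forall>\<epsilon>>0.
       C2_on {0..1} (mueps \<epsilon>)
     \<and> (\<forall>x\<in>{\<epsilon>..1-\<epsilon>}. mueps \<epsilon> x = mu x)
     \<and> (\<forall>x\<in>{0<..<1}. \<bar>mueps \<epsilon> x\<bar> \<le> \<bar>mu x\<bar>)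
     \<and> one_sided_lip c (mueps \<epsilon>) \<and> sign_cond \<rho> (mueps \<epsilon>))"

definition filtration_on :: "'a measure \<Rightarrow> (real \<Rightarrow> 'a measure) \<Rightarrow> bool" where
  "filtration_on M F \<longleftrightarrow> (\<forall>t\<ge>0. space (F t) = space M \<and> sets (F t) \<subseteq> sets M)
     \<and> (\<forall>s t. 0 \<le> s \<longrightarrow> s \<le> t \<longrightarrow> sets (F s) \<subseteq> sets (F t))"

definition usual_conditions :: "'a measure \<Rightarrow> (real \<Rightarrow> 'a measure) \<Rightarrow> bool" where
  "usual_conditions M F \<longleftrightarrow> filtration_on M F
     \<and> (\<forall>A B. B \<in> null_sets M \<longrightarrow> A \<subseteq> B \<longrightarrow> A \<in> sets (F 0))
     \<and> (\<forall>t\<ge>0. sets (F t) = (\<Inter>s\<in>{t<..}. sets (F s)))"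

definition BM_wrt :: "'a measure \<Rightarrow> (real \<Rightarrow> 'a measure) \<Rightarrow> (real \<Rightarrow> 'a \<Rightarrow> real) \<Rightarrow> bool" where
  "BM_wrt M F W \<longleftrightarrow>
     (AE \<omega> in M. W 0 \<omega> = 0 \<and> continuous_on {0..} (\<lambda>t. W t \<omega>))
   \<and> (\<forall>t\<ge>0. W t \<in> borel_measurable (F t))
   \<and> (\<forall>s t. 0 \<le> s \<longrightarrow> s < t \<longrightarrow>
        distributed M lborel (\<lambda>\<omega>. W t \<omega> - W s \<omega>) (\<lambda>x. ennreal (normal_density 0 (sqrt (t - s)) x))
      \<and> prob_space.indep_set M (sets (F s))
          (sigma_sets (space M) {(\<lambda>\<omega>. W t \<omega> - W s \<omega>) -` A \<inter> space M | A. A \<in> sets borel}))"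

definition indep_BMs :: "'a measure \<Rightarrow> (real \<Rightarrow> 'a measure) \<Rightarrow> ('i \<Rightarrow> real \<Rightarrow> 'a \<Rightarrow> real) \<Rightarrow> 'i set \<Rightarrow> bool" where
  "indep_BMs M F W I \<longleftrightarrow> (\<forall>i\<in>I. BM_wrt M F (W i))
   \<and> prob_space.indep_vars M (\<lambda>_. PiM {0..} (\<lambda>_. borel)) (\<lambda>i \<omega>. restrict (\<lambda>t. W i t \<omega>) {0..}) I
   \<and> (\<forall>s\<ge>0. prob_space.indep_set M (sets (F s))
        (sigma_sets (space M) {(\<lambda>\<omega>. W i u \<omega> - W i s \<omega>) -` A \<inter> space M | i u A. i \<in> I \<and> s \<le> u \<and> A \<in> sets borel}))"

definition progressive :: "'a measure \<Rightarrow> (real \<Rightarrow> 'a measure) \<Rightarrow> real \<Rightarrow> (real \<Rightarrow> 'a \<Rightarrow> real) \<Rightarrow> bool" where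
  "progressive M F T Y \<longleftrightarrow>
     (\<forall>t\<in>{0..T}. (\<lambda>(s, \<omega>). Y s \<omega>) \<in> borel_measurable (restrict_space borel {0..t} \<Otimes>\<^sub>M F t))"

definition variation_sums :: "(real \<Rightarrow> real) \<Rightarrow> real \<Rightarrow> real \<Rightarrow> real set" where
  "variation_sums k a b = {(\<Sum>i<n. \<bar>k (p (Suc i)) - k (p i)\<bar>) | n p.
       p 0 = a \<and> p n = b \<and> (\<forall>i<n. p i \<le> p (Suc i))}"

definition bv_on :: "(real \<Rightarrow> real) \<Rightarrow> real \<Rightarrow> real \<Rightarrow> bool" where
  "bv_on k a b \<longleftrightarrow> bdd_above (variation_sums k a b)"

definition tv :: "(real \<Rightarrow> real) \<Rightarrow> real \<Rightarrow> real \<Rightarrow> real" where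
  "tv k a b = Sup (variation_sums k a b)"

definition clamp :: "real \<Rightarrow> real \<Rightarrow> real" where
  "clamp T t = max 0 (min T t)"

text \<open>n(0) = -1, n(1) = 1 (value elsewhere irrelevant).\<close>
definition nvec :: "real \<Rightarrow> real" where
  "nvec x = (if x = 0 then -1 else if x = 1 then 1 else 0)"

text \<open>The particle system for fixed N and a fixed drift mue (= mu^eps); pathwise
  (integrated) form of the SDE, with k_0 = 0, and the Skorokhod conditions expressed with the
  Lebesgue-Stieltjes measure of t \<mapsto> |k|_t.\<close>
definition particle_solution ::
  "'a measure \<Rightarrow> (real \<Rightarrow> 'a measure) \<Rightarrow> real \<Rightarrow> real \<Rightarrow> (real \<Rightarrow> real) \<Rightarrow> (real \<Rightarrow> real) \<Rightarrow> nat
   \<Rightarrow> (nat \<Rightarrow> 'a \<Rightarrow> real) \<Rightarrow> (nat \<Rightarrow> real \<Rightarrow> 'a \<Rightarrow> real)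
   \<Rightarrow> (nat \<Rightarrow> real \<Rightarrow> 'a \<Rightarrow> real) \<Rightarrow> (nat \<Rightarrow> real \<Rightarrow> 'a \<Rightarrow> real) \<Rightarrow> bool" where
  "particle_solution M F T \<sigma> q mue N X0 W X k \<longleftrightarrow>
    (\<forall>i\<in>{1..N}. progressive M F T (X i) \<and> progressive M F T (k i))
  \<and> (AE \<omega> in M. \<forall>i\<in>{1..N}.
       continuous_on {0..T} (\<lambda>t. X i t \<omega>) \<and> (\<forall>t\<in>{0..T}. X i t \<omega> \<in> {0..1})
     \<and> continuous_on {0..T} (\<lambda>t. k i t \<omega>) \<and> bv_on (\<lambda>t. k i t \<omega>) 0 T
     \<and> X i 0 \<omega> = X0 i \<omega> \<and> k i 0 \<omega> = 0
     \<and> emeasure (interval_measure (\<lambda>t. tv (\<lambda>s. k i s \<omega>) 0 (clamp T t)))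
          {t\<in>{0..T}. X i t \<omega> \<notin> {0, 1}} = 0
     \<and> (\<forall>t\<in>{0..T}. k i t \<omega> =
          (LINT s:{0..t}|interval_measure (\<lambda>t. tv (\<lambda>s. k i s \<omega>) 0 (clamp T t)). nvec (X i s \<omega>)))
     \<and> (\<forall>t\<in>{0..T}. X i t \<omega> = X0 i \<omega>
          + (LINT r:{0..t}|lborel. - mue (X i r \<omega>) + (\<Sum>j\<in>{1..N}. mue (X j r \<omega>)) / real N)
          + (q t - q 0) + \<sigma> * W i t \<omega> - \<sigma> / real N * (\<Sum>j\<in>{1..N}. W j t \<omega>)
          - k i t \<omega> + (\<Sum>j\<in>{1..N}. k j t \<omega>) / real N))"

type_synonym path = "real \<Rightarrow>\<^sub>C real"

text \<open>C([0,T];R) is identified with the closed subspace of bounded continuous functions on R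
  that are constant outside [0,T]; sup-norm = uniform norm on [0,T].\<close>
definition Cp :: "real \<Rightarrow> path set" where
  "Cp T = {f. \<forall>t. apply_bcontfun f t = apply_bcontfun f (clamp T t)}"

definition cpath :: "real \<Rightarrow> (real \<Rightarrow> real) \<Rightarrow> path" where
  "cpath T f = Bcontfun (\<lambda>t. f (clamp T t))"

definition Eset :: "real \<Rightarrow> (path \<times> path \<times> path) set" where
  "Eset T = {(w, x, z). w \<in> Cp T \<and> x \<in> Cp T \<and> z \<in> Cp T \<and> (\<forall>t. apply_bcontfun x t \<in> {0..1})}"

definition PM :: "'b::topological_space set \<Rightarrow> 'b measure set" where
  "PM S = {\<mu>. sets \<mu> = sets borel \<and> prob_space \<mu> \<and> emeasure \<mu> S = 1}"

definition wtop :: "'b::metric_space set \<Rightarrow> 'b measure topology" where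
  "wtop S = subtopology
     (topology_generated_by {{\<mu>. (\<integral>x. apply_bcontfun f x \<partial>\<mu>) \<in> U} | (f :: 'b \<Rightarrow>\<^sub>C real) U. open U})
     (PM S)"

definition borel_top :: "'c topology \<Rightarrow> 'c measure" where
  "borel_top X = sigma (topspace X) {U. openin X U}"

definition weak_conv_top :: "'c topology \<Rightarrow> (nat \<Rightarrow> 'c measure) \<Rightarrow> 'c measure \<Rightarrow> bool" where
  "weak_conv_top X \<Lambda>s \<Lambda> \<longleftrightarrow> (\<forall>G. continuous_map X euclideanreal G \<and> (\<exists>B. \<forall>x\<in>topspace X. \<bar>G x\<bar> \<le> B)
      \<longrightarrow> (\<lambda>n. \<integral>x. G x \<partial>(\<Lambda>s n)) \<longlonglongrightarrow> (\<integral>x. G x \<partial>\<Lambda>))"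

definition emp :: "nat \<Rightarrow> (nat \<Rightarrow> 'b::topological_space) \<Rightarrow> 'b measure" where
  "emp N pts = distr (measure_pmf (pmf_of_multiset (image_mset pts (mset_set {1..N})))) borel (\<lambda>x. x)"

definition Lemp :: "real \<Rightarrow> (nat \<Rightarrow> real \<Rightarrow> 'a \<Rightarrow> real) \<Rightarrow> (real \<Rightarrow> real \<Rightarrow> real)
    \<Rightarrow> (nat \<Rightarrow> real \<Rightarrow> nat \<Rightarrow> real \<Rightarrow> 'a \<Rightarrow> real) \<Rightarrow> (nat \<Rightarrow> real \<Rightarrow> nat \<Rightarrow> real \<Rightarrow> 'a \<Rightarrow> real)
    \<Rightarrow> nat \<Rightarrow> real \<Rightarrow> 'a \<Rightarrow> (path \<times> path \<times> path) measure" where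
  "Lemp T W mueps Xp kp N \<epsilon> \<omega> = emp N (\<lambda>i.
      (cpath T (\<lambda>t. W i t \<omega>),
       cpath T (\<lambda>t. Xp N \<epsilon> i t \<omega>),
       cpath T (\<lambda>t. - (LINT r:{0..t}|lborel. mueps \<epsilon> (Xp N \<epsilon> i r \<omega>)) - kp N \<epsilon> i t \<omega>)))"

definition pathmap :: "real \<Rightarrow> path \<times> path \<times> path \<Rightarrow> path" where
  "pathmap \<sigma> \<gamma> = (case \<gamma> of (w, x, z) \<Rightarrow>
     Bcontfun (\<lambda>t. apply_bcontfun x t - apply_bcontfun x 0 - \<sigma> * apply_bcontfun w t - apply_bcontfun z t))"

end

theory Submission
  imports Defs
begin


lemma distr_AE_zero_integral:
  fixes G :: "'c \<Rightarrow> real"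
  assumes Gm: "G \<in> borel_measurable N" and AE: "AE \<omega> in M. G (f \<omega>) = 0"
  shows "(\<integral>x. G x \<partial>distr M N f) = 0"
proof -
  let ?A = "{x\<in>space N. G x \<noteq> 0}"
  have Ain: "?A \<in> sets N" using Gm by measurable
  obtain Z where Z: "Z \<in> null_sets M" "{\<omega>\<in>space M. \<not> G (f \<omega>) = 0} \<subseteq> Z"
    using AE by (auto simp: eventually_ae_filter)
  have sub: "f -` ?A \<inter> space M \<subseteq> Z" using Z(2) by auto
  have "emeasure M (f -` ?A \<inter> space M) = 0"
  proof (cases "f -` ?A \<inter> space M \<in> sets M")
    case True
    have "emeasure M (f -` ?A \<inter> space M) \<le> emeasure M Z"
      using Z(1) by (intro emeasure_mono[OF sub]) auto
    then show ?thesis using Z(1) by (simp add: null_sets_def)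
  next
    case False then show ?thesis by (simp add: emeasure_notin_sets)
  qed
  hence "emeasure (distr M N f) ?A = 0"
    unfolding distr_def emeasure_measure_of_conv by auto
  hence "?A \<in> null_sets (distr M N f)" using Ain by (simp add: null_sets_def)
  hence "AE x in distr M N f. G x = 0"
    by (intro AE_I'[where N="?A"]) auto
  thus ?thesis by (rule integral_eq_zero_AE)
qed

lemma borel_top_measurable:
  assumes "continuous_map X euclideanreal G"
  shows "G \<in> borel_measurable (borel_top X)"
proof (rule borel_measurableI)
  fix S :: "real set" assume "open S"
  hence "openin X {x \<in> topspace X. G x \<in> S}"
    using assms by (simp add: continuous_map)
  moreover have "G -` S \<inter> space (borel_top X) = {x \<in> topspace X. G x \<in> S}"
    unfolding borel_top_def by (auto simp: space_measure_of_conv)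
  moreover have "Collect (openin X) \<subseteq> Pow (topspace X)" by (auto dest: openin_subset)
  hence "sets (borel_top X) = sigma_sets (topspace X) (Collect (openin X))"
    unfolding borel_top_def by (rule sets_measure_of)
  ultimately show "G -` S \<inter> space (borel_top X) \<in> sets (borel_top X)"
    by (auto intro: sigma_sets.Basic)
qed

lemma space_borel_top[simp]: "space (borel_top X) = topspace X"
  unfolding borel_top_def by (rule space_measure_of) (auto dest: openin_subset)

lemma weak_limit_AE_zero:
  fixes G :: "'c \<Rightarrow> real"
  assumes wc: "weak_conv_top X (\<lambda>n. distr M (borel_top X) (f n)) Q"
    and Gc: "continuous_map X euclideanreal G" and Gb: "\<forall>x\<in>topspace X. \<bar>G x\<bar> \<le> B"
    and Gnn: "\<forall>x\<in>topspace X. 0 \<le> G x"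
    and ev: "eventually (\<lambda>n. AE \<omega> in M. G (f n \<omega>) = 0) sequentially"
    and prob: "prob_space M" and Lm: "L \<in> measurable M (borel_top X)"
    and law: "distr M (borel_top X) L = Q"
  shows "AE \<omega> in M. G (L \<omega>) = 0"
proof -
  have Gm: "G \<in> borel_measurable (borel_top X)" by (rule borel_top_measurable[OF Gc])
  have lim: "(\<lambda>n. \<integral>x. G x \<partial>distr M (borel_top X) (f n)) \<longlonglongrightarrow> (\<integral>x. G x \<partial>Q)"
    using wc Gc Gb unfolding weak_conv_top_def by blast
  have "eventually (\<lambda>n. (\<integral>x. G x \<partial>distr M (borel_top X) (f n)) = 0) sequentially"
    using ev by eventually_elim (rule distr_AE_zero_integral[OF Gm])
  hence "(\<lambda>n. \<integral>x. G x \<partial>distr M (borel_top X) (f n)) \<longlonglongrightarrow> 0"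
    by (rule tendsto_eventually)
  hence Q0: "(\<integral>x. G x \<partial>Q) = 0" using lim LIMSEQ_unique by metis
  have "(\<integral>x. G x \<partial>Q) = (\<integral>\<omega>. G (L \<omega>) \<partial>M)"
    unfolding law[symmetric] by (rule integral_distr[OF Lm Gm])
  hence I0: "(\<integral>\<omega>. G (L \<omega>) \<partial>M) = 0" using Q0 by simp
  have Lsp: "\<And>\<omega>. \<omega> \<in> space M \<Longrightarrow> L \<omega> \<in> topspace X"
    using measurable_space[OF Lm] by simp
  have GLm: "(\<lambda>\<omega>. G (L \<omega>)) \<in> borel_measurable M"
    using measurable_comp[OF Lm Gm] by (simp add: comp_def)
  have int: "integrable M (\<lambda>\<omega>. G (L \<omega>))"
  proof (rule finite_measure.integrable_const_bound[where B=B])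
    show "finite_measure M" using prob by (simp add: prob_space_def)
    show "AE x in M. norm (G (L x)) \<le> B" using Gb Lsp by auto
  qed (rule GLm)
  show ?thesis
    using integral_nonneg_eq_0_iff_AE[OF int] I0 Gnn Lsp by auto
qed

lemma topspace_wtop[simp]:
  fixes S :: "'b::metric_space set"
  shows "topspace (wtop S) = PM S"
proof -
  have "UNIV \<in> {{\<mu>. (\<integral>x. apply_bcontfun f x \<partial>\<mu>) \<in> U} | (f :: 'b \<Rightarrow>\<^sub>C real) U. open U}"
    by (rule CollectI, rule exI[where x=0], rule exI[where x=UNIV]) auto
  hence "\<Union>{{\<mu>. (\<integral>x. apply_bcontfun f x \<partial>\<mu>) \<in> U} | (f :: 'b \<Rightarrow>\<^sub>C real) U. open U} = UNIV"
    by blast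
  thus ?thesis unfolding wtop_def by simp
qed

lemma wtop_integral_cont:
  fixes f :: "'b::metric_space \<Rightarrow>\<^sub>C real"
  shows "continuous_map (wtop S) euclideanreal (\<lambda>\<mu>. \<integral>x. apply_bcontfun f x \<partial>\<mu>)"
  unfolding wtop_def
proof (rule continuous_map_from_subtopology)
  let ?S = "{{\<mu>. (\<integral>x. apply_bcontfun f x \<partial>\<mu>) \<in> U} | (f :: 'b \<Rightarrow>\<^sub>C real) U. open U}"
  have "UNIV \<in> ?S"
    by (rule CollectI, rule exI[where x=0], rule exI[where x=UNIV]) auto
  hence top: "topspace (topology_generated_by ?S) = UNIV" by auto
  show "continuous_map (topology_generated_by ?S) euclideanreal (\<lambda>\<mu>. \<integral>x. apply_bcontfun f x \<partial>\<mu>)"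
    unfolding continuous_map
  proof (intro conjI allI impI)
    fix U :: "real set" assume "openin euclideanreal U"
    hence "open U" by simp
    hence "{\<mu>. (\<integral>x. apply_bcontfun f x \<partial>\<mu>) \<in> U} \<in> ?S" by blast
    thus "openin (topology_generated_by ?S) {x \<in> topspace (topology_generated_by ?S). (\<integral>xa. apply_bcontfun f xa \<partial>x) \<in> U}"
      unfolding top by (auto intro: topology_generated_by_Basis)
  qed auto
qed

lemma integral_emp:
  fixes g :: "'b::topological_space \<Rightarrow> real"
  assumes "N \<ge> 1" and gm: "g \<in> borel_measurable borel"
  shows "(\<integral>x. g x \<partial>emp N pts) = (\<Sum>i\<in>{1..N}. g (pts i)) / real N"
proof -
  have e: "pmf_of_multiset (image_mset pts (mset_set {1..N})) = map_pmf pts (pmf_of_set {1..N})"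
    using assms by (subst map_pmf_of_set) auto
  have "(\<integral>x. g x \<partial>emp N pts) = (\<integral>x. g x \<partial>measure_pmf (map_pmf pts (pmf_of_set {1..N})))"
    unfolding emp_def e
    by (subst integral_distr) (auto simp: gm)
  also have "\<dots> = (\<Sum>i\<in>{1..N}. g (pts i)) / real N"
    using assms by (simp add: integral_pmf_of_set)
  finally show ?thesis .
qed

lemma eval_lip: "1-lipschitz_on UNIV (\<lambda>p::('a::topological_space \<Rightarrow>\<^sub>C real). apply_bcontfun p t)"
  by (rule lipschitz_onI) (auto simp: dist_bounded)

lemma eval_cont_base: "continuous_on UNIV (\<lambda>p::('a::topological_space \<Rightarrow>\<^sub>C real). apply_bcontfun p t)"
  using eval_lip by (rule lipschitz_on_continuous_on)

lemma eval_cont[continuous_intros]: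
  fixes g :: "'b::topological_space \<Rightarrow> ('a::topological_space \<Rightarrow>\<^sub>C real)"
  shows "continuous_on S g \<Longrightarrow> continuous_on S (\<lambda>\<gamma>. apply_bcontfun (g \<gamma>) t)"
  using continuous_on_compose2[OF eval_cont_base, of S g] by auto

definition Yf :: "real \<Rightarrow> real \<Rightarrow> path \<times> path \<times> path \<Rightarrow> real" where
  "Yf \<sigma> t \<gamma> = apply_bcontfun (fst (snd \<gamma>)) t - apply_bcontfun (fst (snd \<gamma>)) 0
     - \<sigma> * apply_bcontfun (fst \<gamma>) t - apply_bcontfun (snd (snd \<gamma>)) t"

lemma Yf_cont: "continuous_on UNIV (Yf \<sigma> t)"
  unfolding Yf_def by (intro continuous_intros)

lemma xev_cont: "continuous_on UNIV (\<lambda>\<gamma>::path \<times> path \<times> path. apply_bcontfun (fst (snd \<gamma>)) t)"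
  by (intro continuous_intros)

definition f1 :: "real \<Rightarrow> (path \<times> path \<times> path) \<Rightarrow>\<^sub>C real" where
  "f1 t = Bcontfun (\<lambda>\<gamma>. max 0 (min 1 (apply_bcontfun (fst (snd \<gamma>)) t)))"
definition fa :: "real \<Rightarrow> real \<Rightarrow> (path \<times> path \<times> path) \<Rightarrow>\<^sub>C real" where
  "fa \<sigma> t = Bcontfun (\<lambda>\<gamma>. arctan (Yf \<sigma> t \<gamma>))"
definition fb :: "real \<Rightarrow> real \<Rightarrow> (path \<times> path \<times> path) \<Rightarrow>\<^sub>C real" where
  "fb \<sigma> t = Bcontfun (\<lambda>\<gamma>. (arctan (Yf \<sigma> t \<gamma>))\<^sup>2)"

lemma f1_apply: "apply_bcontfun (f1 t) = (\<lambda>\<gamma>. max 0 (min 1 (apply_bcontfun (fst (snd \<gamma>)) t)))"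
  unfolding f1_def
proof (rule Bcontfun_inverse, rule bcontfun_normI)
  show "continuous_on UNIV (\<lambda>\<gamma>::path \<times> path \<times> path. max 0 (min 1 (apply_bcontfun (fst (snd \<gamma>)) t)))"
    by (intro continuous_intros)
qed (auto simp: max_def min_def)

lemma fa_apply: "apply_bcontfun (fa \<sigma> t) = (\<lambda>\<gamma>. arctan (Yf \<sigma> t \<gamma>))"
  unfolding fa_def
proof (rule Bcontfun_inverse, rule bcontfun_normI)
  show "continuous_on UNIV (\<lambda>\<gamma>. arctan (Yf \<sigma> t \<gamma>))"
    using Yf_cont by (intro continuous_intros)
  fix \<gamma> show "norm (arctan (Yf \<sigma> t \<gamma>)) \<le> pi/2"
    using arctan_bounded[of "Yf \<sigma> t \<gamma>"] by auto
qed

lemma fb_apply: "apply_bcontfun (fb \<sigma> t) = (\<lambda>\<gamma>. (arctan (Yf \<sigma> t \<gamma>))\<^sup>2)"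
  unfolding fb_def
proof (rule Bcontfun_inverse, rule bcontfun_normI)
  show "continuous_on UNIV (\<lambda>\<gamma>. (arctan (Yf \<sigma> t \<gamma>))\<^sup>2)"
    using Yf_cont by (intro continuous_intros)
  fix \<gamma>
  have "\<bar>arctan (Yf \<sigma> t \<gamma>)\<bar> \<le> pi/2" using arctan_bounded[of "Yf \<sigma> t \<gamma>"] by auto
  hence "\<bar>arctan (Yf \<sigma> t \<gamma>)\<bar>\<^sup>2 \<le> (pi/2)\<^sup>2" by (intro power_mono) auto
  thus "norm ((arctan (Yf \<sigma> t \<gamma>))\<^sup>2) \<le> (pi/2)\<^sup>2" by simp
qed

lemma pathmap_apply: "apply_bcontfun (pathmap \<sigma> \<gamma>) = (\<lambda>t. Yf \<sigma> t \<gamma>)"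
proof -
  obtain w x z where g: "\<gamma> = (w, x, z)" by (cases \<gamma>) auto
  have "(\<lambda>t. apply_bcontfun x t - apply_bcontfun x 0 - \<sigma> * apply_bcontfun w t - apply_bcontfun z t) \<in> bcontfun"
  proof (rule bcontfun_normI)
    show "continuous_on UNIV (\<lambda>t. apply_bcontfun x t - apply_bcontfun x 0 - \<sigma> * apply_bcontfun w t - apply_bcontfun z t)"
      by (intro continuous_intros continuous_on_apply_bcontfun)
    fix t
    have a: "\<bar>apply_bcontfun x t\<bar> \<le> norm x" "\<bar>apply_bcontfun x 0\<bar> \<le> norm x"
      "\<bar>apply_bcontfun z t\<bar> \<le> norm z" using norm_bounded[of x] norm_bounded[of z] by auto
    have "\<bar>apply_bcontfun w t\<bar> \<le> norm w" using norm_bounded[of w] by auto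
    hence b: "\<bar>\<sigma> * apply_bcontfun w t\<bar> \<le> \<bar>\<sigma>\<bar> * norm w"
      by (simp add: abs_mult mult_left_mono)
    show "norm (apply_bcontfun x t - apply_bcontfun x 0 - \<sigma> * apply_bcontfun w t - apply_bcontfun z t)
      \<le> norm x + norm x + \<bar>\<sigma>\<bar> * norm w + norm z"
      using a b unfolding real_norm_def abs_le_iff by linarith
  qed
  thus ?thesis unfolding pathmap_def g Yf_def by (simp add: Bcontfun_inverse)
qed

lemma pathmap_cont: "continuous_on UNIV (pathmap \<sigma>)"
proof -
  have "(3 + \<bar>\<sigma>\<bar>)-lipschitz_on UNIV (pathmap \<sigma>)"
  proof (rule lipschitz_onI)
    fix \<gamma> \<gamma>' :: "path \<times> path \<times> path"
    obtain w x z where g: "\<gamma> = (w, x, z)" by (cases \<gamma>) auto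
    obtain w' x' z' where g': "\<gamma>' = (w', x', z')" by (cases \<gamma>') auto
    have dw: "dist w w' \<le> dist \<gamma> \<gamma>'" unfolding g g' using dist_fst_le[of "(w,x,z)" "(w',x',z')"] by simp
    have dxz: "dist (x, z) (x', z') \<le> dist \<gamma> \<gamma>'" unfolding g g' using dist_snd_le[of "(w,x,z)" "(w',x',z')"] by simp
    have dx: "dist x x' \<le> dist \<gamma> \<gamma>'" using dist_fst_le[of "(x,z)" "(x',z')"] dxz by simp
    have dz: "dist z z' \<le> dist \<gamma> \<gamma>'" using dist_snd_le[of "(x,z)" "(x',z')"] dxz by simp
    have "dist (pathmap \<sigma> \<gamma>) (pathmap \<sigma> \<gamma>') \<le> dist x x' + dist x x' + \<bar>\<sigma>\<bar> * dist w w' + dist z z'"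
    proof (rule dist_bound)
      fix t
      have a: "\<bar>apply_bcontfun x t - apply_bcontfun x' t\<bar> \<le> dist x x'"
        using dist_bounded[of x t x'] by (simp add: dist_real_def)
      have b: "\<bar>apply_bcontfun x 0 - apply_bcontfun x' 0\<bar> \<le> dist x x'"
        using dist_bounded[of x 0 x'] by (simp add: dist_real_def)
      have c: "\<bar>apply_bcontfun w t - apply_bcontfun w' t\<bar> \<le> dist w w'"
        using dist_bounded[of w t w'] by (simp add: dist_real_def)
      have d: "\<bar>apply_bcontfun z t - apply_bcontfun z' t\<bar> \<le> dist z z'"
        using dist_bounded[of z t z'] by (simp add: dist_real_def)
      have c': "\<bar>\<sigma> * apply_bcontfun w t - \<sigma> * apply_bcontfun w' t\<bar> \<le> \<bar>\<sigma>\<bar> * dist w w'"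
        using mult_left_mono[OF c, of "\<bar>\<sigma>\<bar>"] by (simp add: abs_mult[symmetric] right_diff_distrib)
      show "dist (apply_bcontfun (pathmap \<sigma> \<gamma>) t) (apply_bcontfun (pathmap \<sigma> \<gamma>') t)
          \<le> dist x x' + dist x x' + \<bar>\<sigma>\<bar> * dist w w' + dist z z'"
        unfolding pathmap_apply g g' Yf_def dist_real_def using a b c' d by simp
    qed
    also have "\<dots> \<le> (3 + \<bar>\<sigma>\<bar>) * dist \<gamma> \<gamma>'"
      using dx dz mult_left_mono[OF dw, of "\<bar>\<sigma>\<bar>"] by (simp add: algebra_simps)
    finally show "dist (pathmap \<sigma> \<gamma>) (pathmap \<sigma> \<gamma>') \<le> (3 + \<bar>\<sigma>\<bar>) * dist \<gamma> \<gamma>'" .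
  qed simp
  thus ?thesis by (rule lipschitz_on_continuous_on)
qed

lemma clamp_id: "t \<in> {0..T} \<Longrightarrow> clamp T t = t"
  by (auto simp: clamp_def)

lemma clamp_in: "T \<ge> 0 \<Longrightarrow> clamp T t \<in> {0..T}"
  by (auto simp: clamp_def)

lemma clamp_clamp: "T \<ge> 0 \<Longrightarrow> clamp T (clamp T t) = clamp T t"
  by (auto simp: clamp_def)

lemma clamp_cont: "continuous_on UNIV (clamp T)"
  unfolding clamp_def by (intro continuous_intros)

lemma cpath_apply:
  assumes T: "T \<ge> 0" and f: "continuous_on {0..T} f"
  shows "apply_bcontfun (cpath T f) t = f (clamp T t)"
proof -
  have c: "continuous_on UNIV (\<lambda>t. f (clamp T t))"
  proof -
    have "range (clamp T) \<subseteq> {0..T}" using clamp_in[OF T] by auto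
    thus ?thesis using continuous_on_compose2[OF f clamp_cont[of T]] by auto
  qed
  have "compact (f ` {0..T})" by (rule compact_continuous_image[OF f]) simp
  then obtain B where B: "\<forall>x\<in>f ` {0..T}. norm x \<le> B"
    using compact_imp_bounded bounded_iff by metis
  have "(\<lambda>t. f (clamp T t)) \<in> bcontfun"
    by (rule bcontfun_normI[OF c, of B]) (use B clamp_in[OF T] in auto)
  thus ?thesis unfolding cpath_def by (simp add: Bcontfun_inverse)
qed

lemma set_integral_sum_fin:
  fixes f :: "'i \<Rightarrow> 'a \<Rightarrow> real"
  assumes "\<And>i. i \<in> I \<Longrightarrow> set_integrable M A (f i)"
  shows "(LINT x:A|M. (\<Sum>i\<in>I. f i x)) = (\<Sum>i\<in>I. LINT x:A|M. f i x)"
  using assms unfolding set_lebesgue_integral_def set_integrable_def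
  by (simp add: sum_distrib_left integral_sum)

lemma pathwise:
  fixes N :: nat and m :: "real \<Rightarrow> real" and Xs k W :: "nat \<Rightarrow> real \<Rightarrow> real" and x0 :: "nat \<Rightarrow> real"
  assumes N: "N \<ge> 1" and mc: "continuous_on {0..1} m"
    and Xc: "\<forall>i\<in>{1..N}. continuous_on {0..T} (Xs i) \<and> (\<forall>t\<in>{0..T}. Xs i t \<in> {0..1})"
    and eq: "\<forall>i\<in>{1..N}. \<forall>t\<in>{0..T}. Xs i t = x0 i
          + (LINT r:{0..t}|lborel. - m (Xs i r) + (\<Sum>j\<in>{1..N}. m (Xs j r)) / real N)
          + (q t - q 0) + \<sigma> * W i t - \<sigma> / real N * (\<Sum>j\<in>{1..N}. W j t)
          - k i t + (\<Sum>j\<in>{1..N}. k j t) / real N"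
    and t: "t \<in> {0..T}"
  shows "(\<Sum>i\<in>{1..N}. Xs i t) / real N = (\<Sum>i\<in>{1..N}. x0 i) / real N + q t - q 0"
    and "\<forall>i\<in>{1..N}. Xs i t - x0 i - \<sigma> * W i t + (LINT r:{0..t}|lborel. m (Xs i r)) + k i t
          = (LINT r:{0..t}|lborel. (\<Sum>j\<in>{1..N}. m (Xs j r)) / real N) + (q t - q 0)
            - \<sigma> / real N * (\<Sum>j\<in>{1..N}. W j t) + (\<Sum>j\<in>{1..N}. k j t) / real N"
proof -
  define I where "I i = (LINT r:{0..t}|lborel. m (Xs i r))" for i
  define J where "J = (LINT r:{0..t}|lborel. (\<Sum>j\<in>{1..N}. m (Xs j r)) / real N)"
  define SW where "SW = (\<Sum>j\<in>{1..N}. W j t)"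
  define SK where "SK = (\<Sum>j\<in>{1..N}. k j t)"
  have sub: "{0..t} \<subseteq> {0..T}" using t by auto
  have gc: "continuous_on {0..t} (\<lambda>r. m (Xs i r))" if i: "i \<in> {1..N}" for i
  proof -
    have "continuous_on {0..t} (Xs i)" using Xc i continuous_on_subset[OF _ sub] by blast
    moreover have "Xs i ` {0..t} \<subseteq> {0..1}" using Xc i sub by auto
    ultimately show ?thesis using continuous_on_compose2[OF mc] by blast
  qed
  have gi: "set_integrable lborel {0..t} (\<lambda>r. m (Xs i r))" if i: "i \<in> {1..N}" for i
    using gc[OF i] by (rule borel_integrable_atLeastAtMost')
  have Si: "set_integrable lborel {0..t} (\<lambda>r. (\<Sum>j\<in>{1..N}. m (Xs j r)) / real N)"
    using gc N by (intro borel_integrable_atLeastAtMost' continuous_intros) auto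
  have JI: "J = (\<Sum>j\<in>{1..N}. I j) / real N"
    unfolding J_def I_def set_integral_divide_zero
    by (subst set_integral_sum_fin) (auto intro: gi)
  have Li: "(LINT r:{0..t}|lborel. - m (Xs i r) + (\<Sum>j\<in>{1..N}. m (Xs j r)) / real N) = - I i + J"
    if i: "i \<in> {1..N}" for i
  proof -
    have u: "set_integrable lborel {0..t} (\<lambda>r. - m (Xs i r))"
      using gi[OF i] by (simp add: set_integrable_def)
    show ?thesis unfolding I_def J_def
      using set_integral_add(2)[OF u Si] set_integral_uminus[OF gi[OF i]] by simp
  qed
  have eqi: "Xs i t = x0 i + (- I i + J) + (q t - q 0) + \<sigma> * W i t - \<sigma> / real N * SW - k i t + SK / real N"
    if i: "i \<in> {1..N}" for i
    using eq i t Li[OF i] unfolding SW_def SK_def by auto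
  show "\<forall>i\<in>{1..N}. Xs i t - x0 i - \<sigma> * W i t + (LINT r:{0..t}|lborel. m (Xs i r)) + k i t
          = (LINT r:{0..t}|lborel. (\<Sum>j\<in>{1..N}. m (Xs j r)) / real N) + (q t - q 0)
            - \<sigma> / real N * (\<Sum>j\<in>{1..N}. W j t) + (\<Sum>j\<in>{1..N}. k j t) / real N"
    using eqi unfolding I_def[symmetric] J_def[symmetric] SW_def[symmetric] SK_def[symmetric] by auto
  have "(\<Sum>i\<in>{1..N}. Xs i t) = (\<Sum>i\<in>{1..N}. x0 i + (- I i + J) + (q t - q 0) + \<sigma> * W i t - \<sigma> / real N * SW - k i t + SK / real N)"
    by (rule sum.cong) (auto simp: eqi)
  also have "\<dots> = (\<Sum>i\<in>{1..N}. x0 i) - (\<Sum>i\<in>{1..N}. I i) + real N * J + real N * (q t - q 0)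
      + \<sigma> * SW - real N * (\<sigma> / real N * SW) - SK + real N * (SK / real N)"
    unfolding SW_def SK_def
    by (simp add: sum.distrib sum_subtractf sum_negf sum_distrib_left[symmetric])
  also have "\<dots> = (\<Sum>i\<in>{1..N}. x0 i) + real N * (q t - q 0)"
    using N unfolding JI by (simp add: field_simps)
  finally show "(\<Sum>i\<in>{1..N}. Xs i t) / real N = (\<Sum>i\<in>{1..N}. x0 i) / real N + q t - q 0"
    using N by (simp add: field_simps)
qed

lemma indef_cont:
  fixes g :: "real \<Rightarrow> real"
  assumes g: "continuous_on {0..T} g"
  shows "continuous_on {0..T} (\<lambda>t. LINT r:{0..t}|lborel. g r)"
proof -
  have "continuous_on {0..T} (\<lambda>t. integral {0..t} g)"
    by (rule indefinite_integral_continuous_1, rule integrable_continuous_real[OF g])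
  moreover have "(LINT r:{0..t}|lborel. g r) = integral {0..t} g" if "t \<in> {0..T}" for t
  proof -
    have "continuous_on {0..t} g" using g that by (auto intro: continuous_on_subset)
    hence "set_integrable lborel {0..t} g" by (rule borel_integrable_atLeastAtMost')
    thus ?thesis by (rule set_borel_integral_eq_integral(2))
  qed
  ultimately show ?thesis using continuous_on_cong by (metis (no_types, lifting))
qed

lemma emp_vals:
  fixes N :: nat and m :: "real \<Rightarrow> real" and Xs k W :: "nat \<Rightarrow> real \<Rightarrow> real" and xz :: "nat \<Rightarrow> real"
  assumes N: "N \<ge> 1" and mc: "continuous_on {0..1} m" and T: "T \<ge> 0"
    and Xc: "\<forall>i\<in>{1..N}. continuous_on {0..T} (Xs i) \<and> (\<forall>t\<in>{0..T}. Xs i t \<in> {0..1})"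
    and Wc: "\<forall>i\<in>{1..N}. continuous_on {0..T} (W i)"
    and kc: "\<forall>i\<in>{1..N}. continuous_on {0..T} (k i)"
    and X0: "\<forall>i\<in>{1..N}. Xs i 0 = xz i"
    and eq: "\<forall>i\<in>{1..N}. \<forall>t\<in>{0..T}. Xs i t = xz i
          + (LINT r:{0..t}|lborel. - m (Xs i r) + (\<Sum>j\<in>{1..N}. m (Xs j r)) / real N)
          + (q t - q 0) + \<sigma> * W i t - \<sigma> / real N * (\<Sum>j\<in>{1..N}. W j t)
          - k i t + (\<Sum>j\<in>{1..N}. k j t) / real N"
    and avg: "(\<Sum>i\<in>{1..N}. xz i) / real N = q 0"
    and t: "t \<in> {0..T}"
  shows "(\<integral>\<gamma>. apply_bcontfun (f1 t) \<gamma> \<partial>emp N (\<lambda>i. (cpath T (W i), cpath T (Xs i),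
            cpath T (\<lambda>t. - (LINT r:{0..t}|lborel. m (Xs i r)) - k i t)))) = q t"
    and "(\<integral>\<gamma>. apply_bcontfun (fb \<sigma> t) \<gamma> \<partial>emp N (\<lambda>i. (cpath T (W i), cpath T (Xs i),
            cpath T (\<lambda>t. - (LINT r:{0..t}|lborel. m (Xs i r)) - k i t))))
         = (\<integral>\<gamma>. apply_bcontfun (fa \<sigma> t) \<gamma> \<partial>emp N (\<lambda>i. (cpath T (W i), cpath T (Xs i),
            cpath T (\<lambda>t. - (LINT r:{0..t}|lborel. m (Xs i r)) - k i t))))\<^sup>2"
proof -
  define pts where "pts i = (cpath T (W i), cpath T (Xs i),
            cpath T (\<lambda>t. - (LINT r:{0..t}|lborel. m (Xs i r)) - k i t))" for i
  note pw = pathwise[OF N mc Xc eq t]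
  have gc: "continuous_on {0..T} (\<lambda>r. m (Xs i r))" if i: "i \<in> {1..N}" for i
  proof -
    have "Xs i ` {0..T} \<subseteq> {0..1}" using Xc i by auto
    thus ?thesis using continuous_on_compose2[OF mc] Xc i by blast
  qed
  have zc: "continuous_on {0..T} (\<lambda>t. - (LINT r:{0..t}|lborel. m (Xs i r)) - k i t)"
    if i: "i \<in> {1..N}" for i
    using indef_cont[OF gc[OF i]] kc i by (intro continuous_intros) auto
  have ct: "clamp T t = t" using t by (rule clamp_id)
  have c0: "clamp T 0 = 0" using T by (simp add: clamp_def)
  have ev: "apply_bcontfun (fst (pts i)) s = W i (clamp T s)"
       "apply_bcontfun (fst (snd (pts i))) s = Xs i (clamp T s)"
       "apply_bcontfun (snd (snd (pts i))) s = - (LINT r:{0..clamp T s}|lborel. m (Xs i r)) - k i (clamp T s)"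
    if i: "i \<in> {1..N}" for i s
    unfolding pts_def using cpath_apply[OF T] Wc Xc zc[OF i] i by auto
  have m1: "apply_bcontfun (f1 t) \<in> borel_measurable borel"
    by (intro borel_measurable_continuous_onI) auto
  have "(\<integral>\<gamma>. apply_bcontfun (f1 t) \<gamma> \<partial>emp N pts) = (\<Sum>i\<in>{1..N}. apply_bcontfun (f1 t) (pts i)) / real N"
    by (rule integral_emp[OF N m1])
  also have "\<dots> = (\<Sum>i\<in>{1..N}. Xs i t) / real N"
  proof -
    have "apply_bcontfun (f1 t) (pts i) = Xs i t" if i: "i \<in> {1..N}" for i
      using ev(2)[OF i, of t] Xc i t unfolding f1_apply ct by auto
    thus ?thesis by simp
  qed
  also have "\<dots> = q t" using pw(1) avg by simp
  finally show "(\<integral>\<gamma>. apply_bcontfun (f1 t) \<gamma> \<partial>emp N (\<lambda>i. (cpath T (W i), cpath T (Xs i),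
            cpath T (\<lambda>t. - (LINT r:{0..t}|lborel. m (Xs i r)) - k i t)))) = q t"
    unfolding pts_def .
  define C where "C = (LINT r:{0..t}|lborel. (\<Sum>j\<in>{1..N}. m (Xs j r)) / real N) + (q t - q 0)
            - \<sigma> / real N * (\<Sum>j\<in>{1..N}. W j t) + (\<Sum>j\<in>{1..N}. k j t) / real N"
  have Yc: "Yf \<sigma> t (pts i) = C" if i: "i \<in> {1..N}" for i
  proof -
    have h: "Xs i t - xz i - \<sigma> * W i t + (LINT r:{0..t}|lborel. m (Xs i r)) + k i t = C"
      using pw(2) i unfolding C_def by blast
    have "Xs i 0 = xz i" using X0 i by auto
    thus ?thesis unfolding Yf_def ev[OF i] ct c0 using h by linarith
  qed
  have ma: "apply_bcontfun (fa \<sigma> t) \<in> borel_measurable borel"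
    by (intro borel_measurable_continuous_onI) auto
  have mb: "apply_bcontfun (fb \<sigma> t) \<in> borel_measurable borel"
    by (intro borel_measurable_continuous_onI) auto
  have Nne: "real N \<noteq> 0" using N by simp
  have "(\<integral>\<gamma>. apply_bcontfun (fa \<sigma> t) \<gamma> \<partial>emp N pts) = arctan C"
    using integral_emp[OF N ma, of pts] Yc Nne by (simp add: fa_apply)
  moreover have "(\<integral>\<gamma>. apply_bcontfun (fb \<sigma> t) \<gamma> \<partial>emp N pts) = (arctan C)\<^sup>2"
    using integral_emp[OF N mb, of pts] Yc Nne by (simp add: fb_apply)
  ultimately show "(\<integral>\<gamma>. apply_bcontfun (fb \<sigma> t) \<gamma> \<partial>emp N (\<lambda>i. (cpath T (W i), cpath T (Xs i),
            cpath T (\<lambda>t. - (LINT r:{0..t}|lborel. m (Xs i r)) - k i t))))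
         = (\<integral>\<gamma>. apply_bcontfun (fa \<sigma> t) \<gamma> \<partial>emp N (\<lambda>i. (cpath T (W i), cpath T (Xs i),
            cpath T (\<lambda>t. - (LINT r:{0..t}|lborel. m (Xs i r)) - k i t))))\<^sup>2"
    unfolding pts_def by simp
qed

lemma C2_cont: "C2_on S f \<Longrightarrow> continuous_on S f"
  unfolding C2_on_def by (auto intro: DERIV_continuous_on)

lemma step_AE:
  assumes T: "T > 0" and reg: "regularization mu mueps" and BMs: "indep_BMs M F W {1..}"
    and X0_mean: "\<forall>N\<ge>1. AE \<omega> in M. (\<Sum>i\<in>{1..N}. X0 N i \<omega>) / real N = q 0"
    and sol: "\<forall>N\<ge>1. \<forall>\<epsilon>>0. particle_solution M F T \<sigma> q (mueps \<epsilon>) N (X0 N) W (Xp N \<epsilon>) (kp N \<epsilon>)"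
    and N: "N \<ge> 1" and e: "\<epsilon> > 0" and t: "t \<in> {0..T}"
  shows "AE \<omega> in M. \<bar>(\<integral>\<gamma>. apply_bcontfun (f1 t) \<gamma> \<partial>Lemp T W mueps Xp kp N \<epsilon> \<omega>) - q t\<bar> = 0
     \<and> \<bar>(\<integral>\<gamma>. apply_bcontfun (fb \<sigma> t) \<gamma> \<partial>Lemp T W mueps Xp kp N \<epsilon> \<omega>)
          - (\<integral>\<gamma>. apply_bcontfun (fa \<sigma> t) \<gamma> \<partial>Lemp T W mueps Xp kp N \<epsilon> \<omega>)\<^sup>2\<bar> = 0"
proof -
  have mc: "continuous_on {0..1} (mueps \<epsilon>)"
    using reg e unfolding regularization_def by (auto intro: C2_cont)
  have AEW: "AE \<omega> in M. \<forall>i\<in>{1..N}. continuous_on {0..T} (\<lambda>t. W i t \<omega>)"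
  proof (rule AE_finite_allI, simp)
    fix i assume i: "i \<in> {1..N}"
    hence "BM_wrt M F (W i)" using BMs unfolding indep_BMs_def by auto
    hence "AE \<omega> in M. W i 0 \<omega> = 0 \<and> continuous_on {0..} (\<lambda>t. W i t \<omega>)"
      unfolding BM_wrt_def by blast
    thus "AE \<omega> in M. continuous_on {0..T} (\<lambda>t. W i t \<omega>)"
      by eventually_elim (auto intro: continuous_on_subset)
  qed
  have AEs: "AE \<omega> in M. \<forall>i\<in>{1..N}.
       continuous_on {0..T} (\<lambda>t. Xp N \<epsilon> i t \<omega>) \<and> (\<forall>t\<in>{0..T}. Xp N \<epsilon> i t \<omega> \<in> {0..1})
     \<and> continuous_on {0..T} (\<lambda>t. kp N \<epsilon> i t \<omega>) \<and> bv_on (\<lambda>t. kp N \<epsilon> i t \<omega>) 0 T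
     \<and> Xp N \<epsilon> i 0 \<omega> = X0 N i \<omega> \<and> kp N \<epsilon> i 0 \<omega> = 0
     \<and> emeasure (interval_measure (\<lambda>t. tv (\<lambda>s. kp N \<epsilon> i s \<omega>) 0 (clamp T t)))
          {t\<in>{0..T}. Xp N \<epsilon> i t \<omega> \<notin> {0, 1}} = 0
     \<and> (\<forall>t\<in>{0..T}. kp N \<epsilon> i t \<omega> =
          (LINT s:{0..t}|interval_measure (\<lambda>t. tv (\<lambda>s. kp N \<epsilon> i s \<omega>) 0 (clamp T t)). nvec (Xp N \<epsilon> i s \<omega>)))
     \<and> (\<forall>t\<in>{0..T}. Xp N \<epsilon> i t \<omega> = X0 N i \<omega>
          + (LINT r:{0..t}|lborel. - mueps \<epsilon> (Xp N \<epsilon> i r \<omega>) + (\<Sum>j\<in>{1..N}. mueps \<epsilon> (Xp N \<epsilon> j r \<omega>)) / real N)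
          + (q t - q 0) + \<sigma> * W i t \<omega> - \<sigma> / real N * (\<Sum>j\<in>{1..N}. W j t \<omega>)
          - kp N \<epsilon> i t \<omega> + (\<Sum>j\<in>{1..N}. kp N \<epsilon> j t \<omega>) / real N)"
    using sol N e unfolding particle_solution_def by blast
  have AEm: "AE \<omega> in M. (\<Sum>i\<in>{1..N}. X0 N i \<omega>) / real N = q 0" using X0_mean N by blast
  from AEW AEs AEm show ?thesis
  proof eventually_elim
    case (elim \<omega>)
    note ev = emp_vals[where N=N and m="mueps \<epsilon>" and T=T and Xs="\<lambda>i t. Xp N \<epsilon> i t \<omega>"
        and W="\<lambda>i t. W i t \<omega>" and k="\<lambda>i t. kp N \<epsilon> i t \<omega>" and xz="\<lambda>i. X0 N i \<omega>" and q=q and \<sigma>=\<sigma> and t=t]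
    have Xc: "\<forall>i\<in>{1..N}. continuous_on {0..T} (\<lambda>t. Xp N \<epsilon> i t \<omega>) \<and> (\<forall>t\<in>{0..T}. Xp N \<epsilon> i t \<omega> \<in> {0..1})"
      using elim(2) by blast
    have kc: "\<forall>i\<in>{1..N}. continuous_on {0..T} (\<lambda>t. kp N \<epsilon> i t \<omega>)" using elim(2) by blast
    have X0: "\<forall>i\<in>{1..N}. Xp N \<epsilon> i 0 \<omega> = X0 N i \<omega>" using elim(2) by blast
    have eq: "\<forall>i\<in>{1..N}. \<forall>t\<in>{0..T}. Xp N \<epsilon> i t \<omega> = X0 N i \<omega>
          + (LINT r:{0..t}|lborel. - mueps \<epsilon> (Xp N \<epsilon> i r \<omega>) + (\<Sum>j\<in>{1..N}. mueps \<epsilon> (Xp N \<epsilon> j r \<omega>)) / real N)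
          + (q t - q 0) + \<sigma> * W i t \<omega> - \<sigma> / real N * (\<Sum>j\<in>{1..N}. W j t \<omega>)
          - kp N \<epsilon> i t \<omega> + (\<Sum>j\<in>{1..N}. kp N \<epsilon> j t \<omega>) / real N"
      using elim(2) by blast
    have T0: "T \<ge> 0" using T by simp
    note ev2 = ev[OF N mc T0 Xc elim(1) kc X0 eq elim(3) t]
    have h: "(\<integral>\<gamma>. apply_bcontfun (f1 t) \<gamma> \<partial>Lemp T W mueps Xp kp N \<epsilon> \<omega>) = q t"
        "(\<integral>\<gamma>. apply_bcontfun (fb \<sigma> t) \<gamma> \<partial>Lemp T W mueps Xp kp N \<epsilon> \<omega>)
          = (\<integral>\<gamma>. apply_bcontfun (fa \<sigma> t) \<gamma> \<partial>Lemp T W mueps Xp kp N \<epsilon> \<omega>)\<^sup>2"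
      unfolding Lemp_def using ev2 by auto
    thus ?case by simp
  qed
qed

lemma rat_approx:
  fixes t T :: real
  assumes t: "t \<in> {0..T}"
  shows "\<exists>d. (\<forall>n. d n \<in> {0..T} \<inter> \<rat>) \<and> d \<longlonglongrightarrow> t"
proof -
  define d where "d n = of_int \<lfloor>t * real (Suc n)\<rfloor> / real (Suc n)" for n
  have up: "d n \<le> t" for n
    unfolding d_def by (simp add: divide_le_eq)
  have lo: "t - 1 / real (Suc n) \<le> d n" for n
  proof -
    have m: "0 < real (Suc n)" by simp
    have "t - 1 / real (Suc n) = (t * real (Suc n) - 1) / real (Suc n)" using m by (simp add: field_simps)
    also have "\<dots> \<le> of_int \<lfloor>t * real (Suc n)\<rfloor> / real (Suc n)"
      by (rule divide_right_mono) (linarith, simp)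
    finally show ?thesis unfolding d_def .
  qed
  have nn: "0 \<le> d n" for n
    unfolding d_def using t by auto
  have rat: "d n \<in> \<rat>" for n unfolding d_def by simp
  have "(\<lambda>n. t - 1 / real (Suc n)) \<longlonglongrightarrow> t - 0"
    by (intro tendsto_intros LIMSEQ_inverse_real_of_nat[unfolded inverse_eq_divide] )
  hence l1: "(\<lambda>n. t - 1 / real (Suc n)) \<longlonglongrightarrow> t" by simp
  have "d \<longlonglongrightarrow> t"
    by (rule tendsto_sandwich[OF _ _ l1 tendsto_const]) (use lo up in \<open>auto simp del: of_nat_Suc\<close>)
  moreover have "\<forall>n. d n \<in> {0..T} \<inter> \<rat>" using up nn rat t by (auto intro: order_trans)
  ultimately show ?thesis by blast
qed

lemma PM_D: "\<mu> \<in> PM S \<Longrightarrow> prob_space \<mu> \<and> sets \<mu> = sets borel \<and> emeasure \<mu> S = 1"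
  unfolding PM_def by auto

lemma bc_meas: "sets \<mu> = sets borel \<Longrightarrow> apply_bcontfun (f :: 'b::metric_space \<Rightarrow>\<^sub>C real) \<in> borel_measurable \<mu>"
  using measurable_cong_sets[of \<mu> borel borel borel] borel_measurable_continuous_onI[OF continuous_on_apply_bcontfun]
  by auto

lemma cont_meas: "sets \<mu> = sets borel \<Longrightarrow> continuous_on UNIV g \<Longrightarrow> (g :: 'b::topological_space \<Rightarrow> 'c::topological_space) \<in> borel_measurable \<mu>"
  using measurable_cong_sets[of \<mu> borel borel borel] borel_measurable_continuous_onI
  by auto

lemma bc_int: "\<mu> \<in> PM S \<Longrightarrow> integrable \<mu> (apply_bcontfun (f :: 'b::metric_space \<Rightarrow>\<^sub>C real))"
proof -
  assume "\<mu> \<in> PM S"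
  hence p: "prob_space \<mu>" and s: "sets \<mu> = sets borel" using PM_D by auto
  show ?thesis
  proof (rule finite_measure.integrable_const_bound[where B="norm f"])
    show "finite_measure \<mu>" using p by (simp add: prob_space_def)
    show "AE x in \<mu>. norm (apply_bcontfun f x) \<le> norm f" by (intro AE_I2 norm_bounded)
  qed (rule bc_meas[OF s])
qed

lemma bc_bound:
  assumes mu: "\<mu> \<in> PM S" and b: "\<forall>x. \<bar>apply_bcontfun (f :: 'b::metric_space \<Rightarrow>\<^sub>C real) x\<bar> \<le> c"
  shows "\<bar>\<integral>x. apply_bcontfun f x \<partial>\<mu>\<bar> \<le> c"
proof -
  have p: "prob_space \<mu>" using PM_D[OF mu] by auto
  have "norm (\<integral>x. apply_bcontfun f x \<partial>\<mu>) \<le> (\<integral>x. norm (apply_bcontfun f x) \<partial>\<mu>)"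
    by (rule integral_norm_bound)
  also have "\<dots> \<le> (\<integral>x. c \<partial>\<mu>)"
    using b bc_int[OF mu, of f] p
    by (intro integral_mono) (auto simp: finite_measure.integrable_const prob_space_def)
  also have "\<dots> = c" using p by (simp add: prob_space.prob_space)
  finally show ?thesis by simp
qed



lemma isCont_apply_bcontfun: "isCont (apply_bcontfun f) t"
  using continuous_on_apply_bcontfun[of UNIV f] continuous_on_eq_continuous_at[OF open_UNIV] by auto

lemma Eset_D: "\<gamma> \<in> Eset T \<Longrightarrow> fst \<gamma> \<in> Cp T \<and> fst (snd \<gamma>) \<in> Cp T \<and> snd (snd \<gamma>) \<in> Cp T
   \<and> (\<forall>t. apply_bcontfun (fst (snd \<gamma>)) t \<in> {0..1})"
  unfolding Eset_def by auto

lemma Yf_clamp: "\<gamma> \<in> Eset T \<Longrightarrow> Yf \<sigma> s \<gamma> = Yf \<sigma> (clamp T s) \<gamma>"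
proof -
  assume g: "\<gamma> \<in> Eset T"
  have "\<forall>t. apply_bcontfun (fst \<gamma>) t = apply_bcontfun (fst \<gamma>) (clamp T t)"
       "\<forall>t. apply_bcontfun (fst (snd \<gamma>)) t = apply_bcontfun (fst (snd \<gamma>)) (clamp T t)"
       "\<forall>t. apply_bcontfun (snd (snd \<gamma>)) t = apply_bcontfun (snd (snd \<gamma>)) (clamp T t)"
    using Eset_D[OF g] unfolding Cp_def by auto
  thus ?thesis unfolding Yf_def by presburger
qed

lemma final:
  fixes \<mu> :: "(path \<times> path \<times> path) measure"
  assumes mu: "\<mu> \<in> PM (Eset T)" and T: "T > 0" and qc: "continuous_on {0..T} q"
    and H1: "\<forall>t\<in>{0..T} \<inter> \<rat>. (\<integral>\<gamma>. apply_bcontfun (f1 t) \<gamma> \<partial>\<mu>) = q t"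
    and H2: "\<forall>t\<in>{0..T} \<inter> \<rat>. (\<integral>\<gamma>. apply_bcontfun (fb \<sigma> t) \<gamma> \<partial>\<mu>) = (\<integral>\<gamma>. apply_bcontfun (fa \<sigma> t) \<gamma> \<partial>\<mu>)\<^sup>2"
  shows "(\<forall>t\<in>{0..T}. (\<integral>\<gamma>. apply_bcontfun (fst (snd \<gamma>)) t \<partial>\<mu>) = q t)
       \<and> (\<exists>c\<in>Cp T. distr \<mu> borel (pathmap \<sigma>) = return borel c)"
proof -
  have p: "prob_space \<mu>" and s: "sets \<mu> = sets borel" and e: "emeasure \<mu> (Eset T) = 1"
    using PM_D[OF mu] by auto
  interpret prob_space \<mu> by (rule p)
  have Ein: "Eset T \<in> sets \<mu>" by (metis e emeasure_notin_sets zero_neq_one)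
  have "prob (Eset T) = 1" using e by (simp add: emeasure_eq_measure)
  hence AEE: "AE \<gamma> in \<mu>. \<gamma> \<in> Eset T" using AE_in_set_eq_1[OF Ein] by simp
  define D where "D = {0..T} \<inter> (\<rat> :: real set)"
  have cD: "countable D" unfolding D_def by (rule countable_subset[OF _ countable_rat]) auto
  have part1: "\<forall>t\<in>{0..T}. (\<integral>\<gamma>. apply_bcontfun (fst (snd \<gamma>)) t \<partial>\<mu>) = q t"
  proof
    fix t assume t: "t \<in> {0..T}"
    obtain d where d: "\<forall>n. d n \<in> {0..T} \<inter> \<rat>" "d \<longlonglongrightarrow> t" using rat_approx[OF t] by blast
    have lim1: "(\<lambda>n. \<integral>\<gamma>. apply_bcontfun (f1 (d n)) \<gamma> \<partial>\<mu>) \<longlonglongrightarrow> (\<integral>\<gamma>. apply_bcontfun (f1 t) \<gamma> \<partial>\<mu>)"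
    proof (rule integral_dominated_convergence[where w="\<lambda>_. 1"])
      show "apply_bcontfun (f1 t) \<in> borel_measurable \<mu>" by (rule bc_meas[OF s])
      show "\<And>i. apply_bcontfun (f1 (d i)) \<in> borel_measurable \<mu>" by (rule bc_meas[OF s])
      show "integrable \<mu> (\<lambda>_. 1::real)" by simp
      show "AE x in \<mu>. (\<lambda>i. apply_bcontfun (f1 (d i)) x) \<longlonglongrightarrow> apply_bcontfun (f1 t) x"
        unfolding f1_apply
        by (intro AE_I2 tendsto_intros isCont_tendsto_compose[OF isCont_apply_bcontfun] d(2))
      show "\<And>i. AE x in \<mu>. norm (apply_bcontfun (f1 (d i)) x) \<le> 1"
        unfolding f1_apply by (intro AE_I2) auto
    qed
    have lim2: "(\<lambda>n. q (d n)) \<longlonglongrightarrow> q t"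
      using continuous_on_tendsto_compose[OF qc d(2) t] d(1) by auto
    have "(\<lambda>n. \<integral>\<gamma>. apply_bcontfun (f1 (d n)) \<gamma> \<partial>\<mu>) = (\<lambda>n. q (d n))"
      using H1 d(1) by auto
    hence I1: "(\<integral>\<gamma>. apply_bcontfun (f1 t) \<gamma> \<partial>\<mu>) = q t"
      using lim1 lim2 LIMSEQ_unique by metis
    have "(\<integral>\<gamma>. apply_bcontfun (fst (snd \<gamma>)) t \<partial>\<mu>) = (\<integral>\<gamma>. apply_bcontfun (f1 t) \<gamma> \<partial>\<mu>)"
    proof (rule integral_cong_AE)
      show "(\<lambda>\<gamma>. apply_bcontfun (fst (snd \<gamma>)) t) \<in> borel_measurable \<mu>"
        by (rule cont_meas[OF s xev_cont])
      show "apply_bcontfun (f1 t) \<in> borel_measurable \<mu>" by (rule bc_meas[OF s])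
      show "AE \<gamma> in \<mu>. apply_bcontfun (fst (snd \<gamma>)) t = apply_bcontfun (f1 t) \<gamma>"
        using AEE by eventually_elim (use Eset_D in \<open>auto simp: f1_apply\<close>)
    qed
    thus "(\<integral>\<gamma>. apply_bcontfun (fst (snd \<gamma>)) t \<partial>\<mu>) = q t" using I1 by simp
  qed
  define m where "m t = (\<integral>\<gamma>. apply_bcontfun (fa \<sigma> t) \<gamma> \<partial>\<mu>)" for t
  have aet: "AE \<gamma> in \<mu>. arctan (Yf \<sigma> t \<gamma>) = m t" if t: "t \<in> D" for t
  proof -
    let ?a = "apply_bcontfun (fa \<sigma> t)" and ?b = "apply_bcontfun (fb \<sigma> t)"
    have ia: "integrable \<mu> ?a" and ib: "integrable \<mu> ?b" using bc_int[OF mu] by auto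
    have geq: "(\<lambda>\<gamma>. (?a \<gamma> - m t)\<^sup>2) = (\<lambda>\<gamma>. ?b \<gamma> - 2 * m t * ?a \<gamma> + (m t)\<^sup>2)"
      by (rule ext) (simp add: fa_apply fb_apply power2_diff)
    have ig: "integrable \<mu> (\<lambda>\<gamma>. (?a \<gamma> - m t)\<^sup>2)"
      unfolding geq using ia ib by auto
    have "(\<integral>\<gamma>. (?a \<gamma> - m t)\<^sup>2 \<partial>\<mu>) = (\<integral>\<gamma>. ?b \<gamma> \<partial>\<mu>) - 2 * m t * (\<integral>\<gamma>. ?a \<gamma> \<partial>\<mu>) + (m t)\<^sup>2"
      unfolding geq using ia ib by (simp add: prob_space)
    also have "\<dots> = 0" using H2 t unfolding D_def m_def by (simp add: power2_eq_square)
    finally have "AE \<gamma> in \<mu>. (?a \<gamma> - m t)\<^sup>2 = 0"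
      using integral_nonneg_eq_0_iff_AE[OF ig] by simp
    thus ?thesis by eventually_elim (simp add: fa_apply)
  qed
  have AEall: "AE \<gamma> in \<mu>. (\<forall>t\<in>D. arctan (Yf \<sigma> t \<gamma>) = m t) \<and> \<gamma> \<in> Eset T"
  proof -
    have "AE \<gamma> in \<mu>. \<forall>t\<in>D. arctan (Yf \<sigma> t \<gamma>) = m t" using aet by (subst AE_ball_countable[OF cD]) blast
    with AEE show ?thesis by eventually_elim blast
  qed
  obtain \<gamma>0 where g0: "\<forall>t\<in>D. arctan (Yf \<sigma> t \<gamma>0) = m t" "\<gamma>0 \<in> Eset T"
  proof -
    have "\<exists>\<gamma>. (\<forall>t\<in>D. arctan (Yf \<sigma> t \<gamma>) = m t) \<and> \<gamma> \<in> Eset T"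
    proof (rule ccontr)
      assume no: "\<not> ?thesis"
      have "AE \<gamma> in \<mu>. False" using AEall by eventually_elim (use no in blast)
      thus False by simp
    qed
    thus ?thesis using that by blast
  qed
  define c where "c = pathmap \<sigma> \<gamma>0"
  have key: "pathmap \<sigma> \<gamma> = c" if g: "\<forall>t\<in>D. arctan (Yf \<sigma> t \<gamma>) = m t" "\<gamma> \<in> Eset T" for \<gamma>
  proof -
    have onD: "Yf \<sigma> s \<gamma> = Yf \<sigma> s \<gamma>0" if "s \<in> D" for s
      using g(1) g0(1) that arctan_eq_iff by metis
    have cY: "isCont (\<lambda>s. Yf \<sigma> s \<delta>) s" for \<delta> s
      using isCont_apply_bcontfun[where f="pathmap \<sigma> \<delta>" and t=s] by (simp add: pathmap_apply)
    have onT: "Yf \<sigma> s \<gamma> = Yf \<sigma> s \<gamma>0" if s: "s \<in> {0..T}" for s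
    proof -
      obtain d where d: "\<forall>n. d n \<in> {0..T} \<inter> \<rat>" "d \<longlonglongrightarrow> s" using rat_approx[OF s] by blast
      have l1: "(\<lambda>n. Yf \<sigma> (d n) \<gamma>) \<longlonglongrightarrow> Yf \<sigma> s \<gamma>" by (rule isCont_tendsto_compose[OF cY d(2)])
      have l2: "(\<lambda>n. Yf \<sigma> (d n) \<gamma>0) \<longlonglongrightarrow> Yf \<sigma> s \<gamma>0" by (rule isCont_tendsto_compose[OF cY d(2)])
      have "(\<lambda>n. Yf \<sigma> (d n) \<gamma>) = (\<lambda>n. Yf \<sigma> (d n) \<gamma>0)" using onD d(1) unfolding D_def by auto
      thus ?thesis using l1 l2 LIMSEQ_unique by metis
    qed
    have "Yf \<sigma> s \<gamma> = Yf \<sigma> s \<gamma>0" for s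
    proof -
      have "Yf \<sigma> s \<gamma> = Yf \<sigma> (clamp T s) \<gamma>" by (rule Yf_clamp[OF g(2)])
      also have "\<dots> = Yf \<sigma> (clamp T s) \<gamma>0" by (rule onT[OF clamp_in]) (use T in simp)
      also have "\<dots> = Yf \<sigma> s \<gamma>0" by (rule Yf_clamp[OF g0(2), symmetric])
      finally show ?thesis .
    qed
    thus ?thesis unfolding c_def by (intro bcontfun_eqI) (simp add: pathmap_apply)
  qed
  have cC: "c \<in> Cp T"
  proof -
    have h: "\<forall>t. Yf \<sigma> t \<gamma>0 = Yf \<sigma> (clamp T t) \<gamma>0" using Yf_clamp[OF g0(2)] by blast
    have "\<forall>t. apply_bcontfun c t = apply_bcontfun c (clamp T t)"
      unfolding c_def by (simp only: pathmap_apply) (rule h)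
    thus ?thesis unfolding Cp_def by blast
  qed
  have "distr \<mu> borel (pathmap \<sigma>) = distr \<mu> borel (\<lambda>_. c)"
  proof (rule distr_cong_AE)
    show "AE x in \<mu>. pathmap \<sigma> x = c" using AEall by eventually_elim (use key in blast)
    show "pathmap \<sigma> \<in> borel_measurable \<mu>" by (rule cont_meas[OF s pathmap_cont])
  qed auto
  also have "\<dots> = return borel c" by (rule distr_const) simp
  finally show ?thesis using part1 cC by blast
qed



theorem mainTheorem17:
  fixes T \<sigma> :: real and q mu :: "real \<Rightarrow> real" and mueps :: "real \<Rightarrow> real \<Rightarrow> real"
    and M :: "'a measure" and F :: "real \<Rightarrow> 'a measure" and W :: "nat \<Rightarrow> real \<Rightarrow> 'a \<Rightarrow> real"
    and X0 :: "nat \<Rightarrow> nat \<Rightarrow> 'a \<Rightarrow> real" and nu0 :: "real measure"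
    and Xp kp :: "nat \<Rightarrow> real \<Rightarrow> nat \<Rightarrow> real \<Rightarrow> 'a \<Rightarrow> real"
    and Ns :: "nat \<Rightarrow> nat" and eps :: "nat \<Rightarrow> real"
    and Q :: "(path \<times> path \<times> path) measure measure"
    and L :: "'a \<Rightarrow> (path \<times> path \<times> path) measure"
  assumes T_pos: "T > 0"
    and M_cond: "condM mu" and Q_cond: "condQ T q" and reg: "regularization mu mueps"
    and prob: "prob_space M" and usual: "usual_conditions M F"
    and BMs: "indep_BMs M F W {1..}"
    and X0_meas: "\<forall>N\<ge>1. \<forall>i\<in>{1..N}. X0 N i \<in> borel_measurable (F 0) \<and> (\<forall>\<omega>\<in>space M. X0 N i \<omega> \<in> {0..1})"
    and X0_mean: "\<forall>N\<ge>1. AE \<omega> in M. (\<Sum>i\<in>{1..N}. X0 N i \<omega>) / real N = q 0"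
    and nu0: "nu0 \<in> PM {0..1}"
    and X0_conv: "weak_conv_top (wtop {0..1})
        (\<lambda>N. distr M (borel_top (wtop {0..1})) (\<lambda>\<omega>. emp N (\<lambda>i. X0 N i \<omega>)))
        (return (borel_top (wtop {0..1})) nu0)"
    and sol: "\<forall>N\<ge>1. \<forall>\<epsilon>>0. particle_solution M F T \<sigma> q (mueps \<epsilon>) N (X0 N) W (Xp N \<epsilon>) (kp N \<epsilon>)"
    and Ns: "filterlim Ns at_top sequentially" and eps_pos: "\<forall>n. eps n > 0" and eps: "eps \<longlonglongrightarrow> 0"
    and L_conv: "weak_conv_top (wtop (Eset T))
        (\<lambda>n. distr M (borel_top (wtop (Eset T))) (Lemp T W mueps Xp kp (Ns n) (eps n))) Q"
    and Q: "sets Q = sets (borel_top (wtop (Eset T)))" "prob_space Q"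
    and L_meas: "L \<in> measurable M (borel_top (wtop (Eset T)))"
    and L_law: "distr M (borel_top (wtop (Eset T))) L = Q"
  shows "AE \<omega> in M.
           (\<forall>t\<in>{0..T}. (\<integral>\<gamma>. apply_bcontfun (fst (snd \<gamma>)) t \<partial>(L \<omega>)) = q t)
         \<and> (\<exists>c\<in>Cp T. distr (L \<omega>) borel (pathmap \<sigma>) = return borel c)"
proof -
  have qc: "continuous_on {0..T} q"
    using Q_cond unfolding condQ_def by (auto intro: lipschitz_on_continuous_on)
  have probM: "prob_space M" by (rule prob)
  define G where "G t \<mu> = \<bar>(\<integral>\<gamma>. apply_bcontfun (f1 t) \<gamma> \<partial>\<mu>) - q t\<bar>
     + \<bar>(\<integral>\<gamma>. apply_bcontfun (fb \<sigma> t) \<gamma> \<partial>\<mu>) - (\<integral>\<gamma>. apply_bcontfun (fa \<sigma> t) \<gamma> \<partial>\<mu>)\<^sup>2\<bar>"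
    for t and \<mu> :: "(path \<times> path \<times> path) measure"
  have evN: "eventually (\<lambda>n. Ns n \<ge> 1) sequentially"
    using Ns by (simp add: filterlim_at_top)
  have AEt: "AE \<omega> in M. G t (L \<omega>) = 0" if t: "t \<in> {0..T}" for t
  proof (rule weak_limit_AE_zero[where f="\<lambda>n. Lemp T W mueps Xp kp (Ns n) (eps n)" and X="wtop (Eset T)"
        and Q=Q and B="1 + \<bar>q t\<bar> + (pi/2)\<^sup>2 + (pi/2)\<^sup>2"])
    show "weak_conv_top (wtop (Eset T)) (\<lambda>n. distr M (borel_top (wtop (Eset T))) (Lemp T W mueps Xp kp (Ns n) (eps n))) Q"
      by (rule L_conv)
    show "continuous_map (wtop (Eset T)) euclideanreal (G t)"
      unfolding G_def by (intro continuous_intros wtop_integral_cont)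
    show "\<forall>x\<in>topspace (wtop (Eset T)). \<bar>G t x\<bar> \<le> 1 + \<bar>q t\<bar> + (pi/2)\<^sup>2 + (pi/2)\<^sup>2"
    proof
      fix \<mu> assume "\<mu> \<in> topspace (wtop (Eset T))"
      hence mu: "\<mu> \<in> PM (Eset T)" by simp
      have b1: "\<bar>\<integral>\<gamma>. apply_bcontfun (f1 t) \<gamma> \<partial>\<mu>\<bar> \<le> 1"
        by (rule bc_bound[OF mu]) (auto simp: f1_apply)
      have ba: "\<bar>\<integral>\<gamma>. apply_bcontfun (fa \<sigma> t) \<gamma> \<partial>\<mu>\<bar> \<le> pi/2"
      proof (rule bc_bound[OF mu], rule allI)
        fix \<gamma>
        show "\<bar>apply_bcontfun (fa \<sigma> t) \<gamma>\<bar> \<le> pi/2"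
          using arctan_bounded[of "Yf \<sigma> t \<gamma>"] unfolding fa_apply by arith
      qed
      have bb: "\<bar>\<integral>\<gamma>. apply_bcontfun (fb \<sigma> t) \<gamma> \<partial>\<mu>\<bar> \<le> (pi/2)\<^sup>2"
      proof (rule bc_bound[OF mu], rule allI)
        fix \<gamma>
        have "\<bar>arctan (Yf \<sigma> t \<gamma>)\<bar> \<le> pi/2" using arctan_bounded[of "Yf \<sigma> t \<gamma>"] by auto
        hence "\<bar>arctan (Yf \<sigma> t \<gamma>)\<bar>\<^sup>2 \<le> (pi/2)\<^sup>2" by (intro power_mono) auto
        thus "\<bar>apply_bcontfun (fb \<sigma> t) \<gamma>\<bar> \<le> (pi/2)\<^sup>2" by (simp add: fb_apply)
      qed
      have ba2: "\<bar>(\<integral>\<gamma>. apply_bcontfun (fa \<sigma> t) \<gamma> \<partial>\<mu>)\<^sup>2\<bar> \<le> (pi/2)\<^sup>2"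
        using power_mono[OF ba, of 2] by simp
      show "\<bar>G t \<mu>\<bar> \<le> 1 + \<bar>q t\<bar> + (pi/2)\<^sup>2 + (pi/2)\<^sup>2"
        unfolding G_def using b1 ba2 bb by arith
    qed
    show "\<forall>x\<in>topspace (wtop (Eset T)). 0 \<le> G t x" unfolding G_def by simp
    show "eventually (\<lambda>n. AE \<omega> in M. G t (Lemp T W mueps Xp kp (Ns n) (eps n) \<omega>) = 0) sequentially"
      using evN
    proof eventually_elim
      case (elim n)
      show ?case
        using step_AE[OF T_pos reg BMs X0_mean sol elim eps_pos[rule_format, of n] t]
        unfolding G_def by (rule AE_mp[OF _ AE_I2]) simp
    qed
  qed (rule prob, rule L_meas, rule L_law)
  define D where "D = {0..T} \<inter> (\<rat> :: real set)"
  have cD: "countable D" unfolding D_def by (rule countable_subset[OF _ countable_rat]) auto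
  have AED: "AE \<omega> in M. \<forall>t\<in>D. G t (L \<omega>) = 0"
    using AEt unfolding D_def by (subst AE_ball_countable[OF cD[unfolded D_def]]) blast
  have AEL: "AE \<omega> in M. L \<omega> \<in> PM (Eset T)"
    using measurable_space[OF L_meas] by (intro AE_I2) simp
  from AED AEL show ?thesis
  proof eventually_elim
    case (elim \<omega>)
    have H: "(\<integral>\<gamma>. apply_bcontfun (f1 t) \<gamma> \<partial>L \<omega>) = q t
      \<and> (\<integral>\<gamma>. apply_bcontfun (fb \<sigma> t) \<gamma> \<partial>L \<omega>) = (\<integral>\<gamma>. apply_bcontfun (fa \<sigma> t) \<gamma> \<partial>L \<omega>)\<^sup>2"
      if t: "t \<in> {0..T} \<inter> \<rat>" for t
    proof -
      have "G t (L \<omega>) = 0" using elim(1) t unfolding D_def by blast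
      thus ?thesis unfolding G_def by (smt (verit) abs_ge_zero)
    qed
    show ?case using final[OF elim(2) T_pos qc] H by blast
  qed
qed


end
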